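(* Let $J$ be a finite set with $|J|$ even. Then $\mathrm{EvenNAE}_J$ has a 2-decomposition.
   Context: $\mathrm{EvenNAE}_J:\{0,1\}^J\to\{0,1\}$ takes value $1$ exactly on those $x$ with $\sum_{i\in J}x_i$ even and $1\le\sum_{i\in J}x_i\le|J|-1$. For $x\in\{0,1\}^J$ and $S\subseteq J$, $x\oplus\mathbf S$ is $x$ with the coordinates in $S$ flipped. A function $H:\{0,1\}^J\to\mathbb{Q}_{\ge0}$ has a 2-decomposition if there are values $D(x,M)\ge0$, for $x\in\{0,1\}^J$ and $M$ ranging over partitions of $J$ into pairs, with $H(x)=\sum_MD(x,M)$ for all $x$ and $D(x\oplus\mathbf S,M)=D(x,M)$ for all $x,M$ and $S\in M$. *)

theory Defs
  imports Main "HOL.Rat"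
begin

text \<open>Points of {0,1}^J: boolean functions that are False outside J.\<close>
definition cube :: "'a set \<Rightarrow> ('a \<Rightarrow> bool) set" where
  "cube J = {x. \<forall>i. i \<notin> J \<longrightarrow> \<not> x i}"

definition weight :: "'a set \<Rightarrow> ('a \<Rightarrow> bool) \<Rightarrow> nat" where
  "weight J x = card {i \<in> J. x i}"

definition EvenNAE :: "'a set \<Rightarrow> ('a \<Rightarrow> bool) \<Rightarrow> rat" where
  "EvenNAE J x = (if even (weight J x) \<and> 1 \<le> weight J x \<and> weight J x \<le> card J - 1
                  then 1 else 0)"

definition flip :: "('a \<Rightarrow> bool) \<Rightarrow> 'a set \<Rightarrow> ('a \<Rightarrow> bool)" where
  "flip x S = (\<lambda>i. if i \<in> S then \<not> x i else x i)"

definition pair_partitions :: "'a set \<Rightarrow> 'a set set set" where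
  "pair_partitions J = {M. \<Union>M = J \<and> (\<forall>S\<in>M. card S = 2)
      \<and> (\<forall>S\<in>M. \<forall>T\<in>M. S \<noteq> T \<longrightarrow> S \<inter> T = {})}"

definition has_2_decomposition :: "'a set \<Rightarrow> (('a \<Rightarrow> bool) \<Rightarrow> rat) \<Rightarrow> bool" where
  "has_2_decomposition J H \<longleftrightarrow>
     (\<exists>D :: ('a \<Rightarrow> bool) \<Rightarrow> 'a set set \<Rightarrow> rat.
        (\<forall>x\<in>cube J. \<forall>M\<in>pair_partitions J. D x M \<ge> 0)
      \<and> (\<forall>x\<in>cube J. H x = (\<Sum>M\<in>pair_partitions J. D x M))
      \<and> (\<forall>x\<in>cube J. \<forall>M\<in>pair_partitions J. \<forall>S\<in>M. D (flip x S) M = D x M))"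

end

theory Submission
  imports Defs
begin


definition mixed :: "('a \<Rightarrow> bool) \<Rightarrow> 'a set \<Rightarrow> bool" where
  "mixed x S \<longleftrightarrow> (\<exists>i\<in>S. x i) \<and> (\<exists>i\<in>S. \<not> x i)"

definition kk :: "('a \<Rightarrow> bool) \<Rightarrow> 'a set set \<Rightarrow> nat" where
  "kk x M = card {S\<in>M. mixed x S}"

fun phi :: "nat \<Rightarrow> nat \<Rightarrow> rat" where
  "phi n 0 = 1"
| "phi n (Suc 0) = 0"
| "phi n (Suc (Suc k)) = - (of_nat (k+1) / of_nat (n - 2 - k)) * phi n k"

lemma phi_rec:
  assumes "j + 1 < n"
  shows "of_nat (n - 1 - j) * phi n (Suc j) + of_nat j * phi n (j - 1) = 0"
proof (cases j)
  case 0 then show ?thesis by simp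
next
  case (Suc i)
  have "n - 1 - j = n - 2 - i" using Suc by simp
  moreover have "n - 2 - i > 0" using assms Suc by simp
  ultimately show ?thesis using Suc by (simp add: field_simps)
qed

lemma phi_abs: "2 * k \<le> n \<Longrightarrow> \<bar>phi n k\<bar> \<le> 1"
proof (induction n k rule: phi.induct)
  case (3 n k)
  then have le: "\<bar>phi n k\<bar> \<le> 1" by simp
  have pos: "n - 2 - k > 0" using 3 by simp
  have r: "of_nat (k+1) / of_nat (n - 2 - k) \<le> (1::rat)" using 3 pos by simp
  have "\<bar>phi n (Suc (Suc k))\<bar> = of_nat (k+1) / of_nat (n - 2 - k) * \<bar>phi n k\<bar>"
    by (simp add: abs_mult)
  also have "\<dots> \<le> 1 * 1" using r le by (intro mult_mono) auto
  finally show ?case by simp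
qed auto

lemma pp_fin: "finite J \<Longrightarrow> finite (pair_partitions J)"
  unfolding pair_partitions_def
  by (rule finite_subset[of _ "Pow (Pow J)"]) auto

lemma pp_block: "M \<in> pair_partitions J \<Longrightarrow> S \<in> M \<Longrightarrow> S \<subseteq> J \<and> card S = 2 \<and> finite S"
  unfolding pair_partitions_def by (auto intro: card_ge_0_finite)

lemma pp_M_fin: "finite J \<Longrightarrow> M \<in> pair_partitions J \<Longrightarrow> finite M"
  proof -
  assume a: "finite J" "M \<in> pair_partitions J"
  then have "M \<subseteq> Pow J" unfolding pair_partitions_def by auto
  then show ?thesis using a(1) finite_subset by blast
qed

lemma pp_uniq: "M \<in> pair_partitions J \<Longrightarrow> S \<in> M \<Longrightarrow> T \<in> M \<Longrightarrow> i \<in> S \<Longrightarrow> i \<in> T \<Longrightarrow> S = T"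
  unfolding pair_partitions_def by blast

lemma pp_card: assumes "finite J" "M \<in> pair_partitions J" shows "card J = 2 * card M"
proof -
  have "card J = card (\<Union>M)" using assms(2) unfolding pair_partitions_def by simp
  also have "\<dots> = sum card M"
    apply (rule card_Union_disjoint)
    using assms pp_M_fin pp_block unfolding pairwise_def disjnt_def pair_partitions_def
    by auto
  also have "\<dots> = sum (\<lambda>_. 2) M" using pp_block[OF assms(2)] by (intro sum.cong) auto
  finally show ?thesis by simp
qed

definition other :: "'a set \<Rightarrow> 'a \<Rightarrow> 'a" where
  "other S b = (THE d. d \<in> S \<and> d \<noteq> b)"

lemma other2: "b \<noteq> d \<Longrightarrow> other {b,d} b = d"
  unfolding other_def by (rule the_equality) auto

lemma pp_block2: "M \<in> pair_partitions J \<Longrightarrow> S \<in> M \<Longrightarrow> \<exists>b d. b \<noteq> d \<and> S = {b,d}"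
proof -
  assume a: "M \<in> pair_partitions J" "S \<in> M"
  have "card S = 2" using pp_block[OF a] by simp
  then obtain b d where "S = {b,d}" "b \<noteq> d" unfolding card_2_iff by blast
  then show ?thesis by blast
qed

lemma pp_memI:
  assumes "\<Union>M = J" "\<And>S. S \<in> M \<Longrightarrow> card S = 2"
    "\<And>S T. S \<in> M \<Longrightarrow> T \<in> M \<Longrightarrow> S \<noteq> T \<Longrightarrow> S \<inter> T = {}"
  shows "M \<in> pair_partitions J"
  using assms unfolding pair_partitions_def by auto

lemma insA_mem:
  assumes "M \<in> pair_partitions (J - {a,z})" "a \<noteq> z" "a \<in> J" "z \<in> J"
  shows "insert {a,z} M \<in> pair_partitions J"
proof (rule pp_memI)
  have u: "\<Union>M = J - {a,z}" using assms(1) unfolding pair_partitions_def by simp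
  then show "\<Union>(insert {a,z} M) = J" using assms by auto
  show "card S = 2" if "S \<in> insert {a,z} M" for S
    using that assms pp_block[OF assms(1)] by auto
  have sub: "S \<subseteq> J - {a,z}" if "S \<in> M" for S using that u by blast
  have dM: "S \<inter> T = {}" if "S \<in> M" "T \<in> M" "S \<noteq> T" for S T
    using that assms(1) unfolding pair_partitions_def by auto
  show "S \<inter> T = {}" if h: "S \<in> insert {a, z} M" "T \<in> insert {a, z} M" "S \<noteq> T" for S T
  proof -
    consider "S = {a,z}" "T \<in> M" | "T = {a,z}" "S \<in> M" | "S \<in> M" "T \<in> M"
      using h by blast
    then show ?thesis
    proof cases
      case 1 then show ?thesis using sub[of T] by auto
    next
      case 2 then show ?thesis using sub[of S] by auto
    next
      case 3 then show ?thesis using dM h(3) by auto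
    qed
  qed
qed

lemma insA_inv:
  assumes "M \<in> pair_partitions J" "{a,z} \<in> M" "a \<noteq> z"
  shows "M - {{a,z}} \<in> pair_partitions (J - {a,z})"
proof (rule pp_memI)
  have u: "\<Union>M = J" and d: "\<forall>S\<in>M. \<forall>T\<in>M. S \<noteq> T \<longrightarrow> S \<inter> T = {}"
    using assms(1) unfolding pair_partitions_def by auto
  show "\<Union>(M - {{a,z}}) = J - {a,z}"
  proof
    show "\<Union>(M - {{a,z}}) \<subseteq> J - {a,z}"
    proof
      fix i assume "i \<in> \<Union>(M - {{a,z}})"
      then obtain S where S: "S \<in> M" "S \<noteq> {a,z}" "i \<in> S" by blast
      have "S \<inter> {a,z} = {}" using d S(1,2) assms(2) by metis
      moreover have "i \<in> J" using S u by blast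
      ultimately show "i \<in> J - {a,z}" using S(3) by blast
    qed
    show "J - {a,z} \<subseteq> \<Union>(M - {{a,z}})"
    proof
      fix i assume i: "i \<in> J - {a,z}"
      then obtain S where "S \<in> M" "i \<in> S" using u by blast
      moreover have "S \<noteq> {a,z}" using i \<open>i \<in> S\<close> by blast
      ultimately show "i \<in> \<Union>(M - {{a,z}})" by blast
    qed
  qed
  show "card S = 2" if "S \<in> M - {{a,z}}" for S using that pp_block[OF assms(1)] by blast
  show "S \<inter> T = {}" if "S \<in> M - {{a,z}}" "T \<in> M - {{a,z}}" "S \<noteq> T" for S T
    using that d by blast
qed

definition G :: "'a \<Rightarrow> 'a \<Rightarrow> 'a set set \<Rightarrow> 'a set \<Rightarrow> 'a \<Rightarrow> 'a set set" where
  "G a z M S b = insert {a,b} (insert {z, other S b} (M - {S}))"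

lemma pp_block_other:
  assumes "M \<in> pair_partitions J" "S \<in> M" "b \<in> S"
  shows "S = {b, other S b} \<and> other S b \<noteq> b"
proof -
  obtain p q where pq: "p \<noteq> q" "S = {p,q}" using pp_block2[OF assms(1,2)] by blast
  show ?thesis
  proof (cases "b = p")
    case True then show ?thesis using pq other2[of p q] by auto
  next
    case False then have "b = q" using pq assms(3) by blast
    then show ?thesis using pq other2[of q p] by (auto simp: insert_commute)
  qed
qed

lemma pp_disj: "M \<in> pair_partitions J \<Longrightarrow> S \<in> M \<Longrightarrow> T \<in> M \<Longrightarrow> S \<noteq> T \<Longrightarrow> S \<inter> T = {}"
  unfolding pair_partitions_def by blast

lemma pp_Un: "M \<in> pair_partitions J \<Longrightarrow> \<Union>M = J"
  unfolding pair_partitions_def by blast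

lemma G_mem:
  assumes M: "M \<in> pair_partitions (J - {a,z})" and S: "S \<in> M" "b \<in> S"
    and az: "a \<noteq> z" "a \<in> J" "z \<in> J"
  shows "G a z M S b \<in> pair_partitions J" "{a,z} \<notin> G a z M S b"
proof -
  define d where "d = other S b"
  have Sbd: "S = {b,d}" "d \<noteq> b" using pp_block_other[OF M S] d_def by auto
  have u: "\<Union>M = J - {a,z}" using pp_Un[OF M] .
  have SJ: "S \<subseteq> J - {a,z}" using u S(1) by blast
  then have bJ: "b \<in> J" "b \<noteq> a" "b \<noteq> z" and dJ: "d \<in> J" "d \<noteq> a" "d \<noteq> z"
    using Sbd by auto
  have Tsub: "T \<subseteq> J - {a,z}" if "T \<in> M" for T using that u by blast
  have Tdisj: "T \<inter> S = {}" if "T \<in> M - {S}" for T using that pp_disj[OF M, of T S] S(1) by blast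
  have Gdef: "G a z M S b = insert {a,b} (insert {z,d} (M - {S}))" unfolding G_def d_def by simp
  show "G a z M S b \<in> pair_partitions J" unfolding Gdef
  proof (rule pp_memI)
    show "\<Union>(insert {a, b} (insert {z, d} (M - {S}))) = J"
    proof
      show "\<Union>(insert {a, b} (insert {z, d} (M - {S}))) \<subseteq> J"
        using bJ dJ az Tsub by blast
      show "J \<subseteq> \<Union>(insert {a, b} (insert {z, d} (M - {S})))"
      proof
        fix i assume i: "i \<in> J"
        show "i \<in> \<Union>(insert {a, b} (insert {z, d} (M - {S})))"
        proof (cases "i \<in> {a,z} \<or> i \<in> S")
          case True then show ?thesis using Sbd by blast
        next
          case False
          then obtain T where T: "T \<in> M" "i \<in> T" using u i by blast
          then have "T \<noteq> S" using False by blast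
          then show ?thesis using T by blast
        qed
      qed
    qed
    show "card T = 2" if hT: "T \<in> insert {a, b} (insert {z, d} (M - {S}))" for T
    proof -
      consider "T = {a,b}" | "T = {z,d}" | "T \<in> M" using hT by blast
      then show ?thesis
      proof cases
        case 1 then show ?thesis using bJ by simp
      next
        case 2 then show ?thesis using dJ by simp
      next
        case 3 then show ?thesis using pp_block[OF M 3] by simp
      qed
    qed
    show "T1 \<inter> T2 = {}" if h: "T1 \<in> insert {a, b} (insert {z, d} (M - {S}))"
        "T2 \<in> insert {a, b} (insert {z, d} (M - {S}))" "T1 \<noteq> T2" for T1 T2
    proof -
      have ab_T: "{a,b} \<inter> T = {}" if "T \<in> M - {S}" for T
        using that Tsub[of T] Tdisj[of T] Sbd by blast
      have zd_T: "{z,d} \<inter> T = {}" if "T \<in> M - {S}" for T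
        using that Tsub[of T] Tdisj[of T] Sbd by blast
      have abzd: "{a,b} \<inter> {z,d} = {}" using az bJ dJ Sbd by blast
      consider "T1 = {a,b}" | "T1 = {z,d}" | "T1 \<in> M - {S}" using h(1) by blast
      then show ?thesis
      proof cases
        case 1
        consider "T2 = {z,d}" | "T2 \<in> M - {S}" using h(2,3) 1 by blast
        then show ?thesis using 1 ab_T abzd by cases auto
      next
        case 2
        consider "T2 = {a,b}" | "T2 \<in> M - {S}" using h(2,3) 2 by blast
        then show ?thesis using 2 zd_T abzd by cases auto
      next
        case 3
        consider "T2 = {a,b}" | "T2 = {z,d}" | "T2 \<in> M - {S}" using h(2) by blast
        then show ?thesis
        proof cases
          case 1 then show ?thesis using 3 ab_T by blast
        next
          case 2 then show ?thesis using 3 zd_T by blast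
        next
          case c: 3 then show ?thesis using 3 h(3) pp_disj[OF M] by blast
        qed
      qed
    qed
  qed
  show "{a,z} \<notin> G a z M S b"
  proof
    assume "{a,z} \<in> G a z M S b"
    then consider "{a,z} = {a,b}" | "{a,z} = {z,d}" | "{a,z} \<in> M" unfolding Gdef by blast
    then show False
    proof cases
      case 1 then show False using bJ by (auto simp: doubleton_eq_iff)
    next
      case 2 then show False using dJ az by (auto simp: doubleton_eq_iff)
    next
      case 3 then show False using Tsub by blast
    qed
  qed
qed

lemma G_surj:
  assumes M: "M \<in> pair_partitions J" "{a,z} \<notin> M" and az: "a \<noteq> z" "a \<in> J" "z \<in> J"
  shows "\<exists>M'' S b. M'' \<in> pair_partitions (J - {a,z}) \<and> S \<in> M'' \<and> b \<in> S \<and> G a z M'' S b = M"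
proof -
  have u: "\<Union>M = J" using pp_Un[OF M(1)] .
  obtain Sa where Sa: "Sa \<in> M" "a \<in> Sa" using u az by blast
  obtain Sz where Sz: "Sz \<in> M" "z \<in> Sz" using u az by blast
  define b where "b = other Sa a"
  define d where "d = other Sz z"
  have Sab: "Sa = {a,b}" "b \<noteq> a" using pp_block_other[OF M(1) Sa] b_def by auto
  have Szd: "Sz = {z,d}" "d \<noteq> z" using pp_block_other[OF M(1) Sz] d_def by auto
  have ne: "Sa \<noteq> Sz"
  proof
    assume "Sa = Sz"
    then have "z \<in> Sa" using Sz by simp
    then have "Sa = {a,z}" using Sab az by auto
    then show False using Sa M(2) by simp
  qed
  have dis: "Sa \<inter> Sz = {}" using pp_disj[OF M(1) Sa(1) Sz(1) ne] .
  have bz: "b \<noteq> z" "d \<noteq> a" "b \<noteq> d" using dis Sab Szd by auto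
  have bdJ: "b \<in> J" "d \<in> J" using Sab Szd Sa Sz u by auto
  have Tdis: "T \<inter> Sa = {} \<and> T \<inter> Sz = {}" if "T \<in> M - {Sa,Sz}" for T
    using that pp_disj[OF M(1)] Sa(1) Sz(1) by blast
  define M'' where "M'' = insert {b,d} (M - {Sa,Sz})"
  have bdnot: "{b,d} \<notin> M - {Sa,Sz}"
  proof
    assume h: "{b,d} \<in> M - {Sa,Sz}"
    then have "{b,d} \<inter> Sa = {}" using Tdis by blast
    then show False using Sab by blast
  qed
  have M''mem: "M'' \<in> pair_partitions (J - {a,z})"
    unfolding M''_def
  proof (rule pp_memI)
    show "\<Union>(insert {b, d} (M - {Sa, Sz})) = J - {a, z}"
    proof
      show "\<Union>(insert {b, d} (M - {Sa, Sz})) \<subseteq> J - {a, z}"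
      proof
        fix i assume "i \<in> \<Union>(insert {b, d} (M - {Sa, Sz}))"
        then consider "i = b" | "i = d" | T where "T \<in> M - {Sa,Sz}" "i \<in> T" by blast
        then show "i \<in> J - {a,z}"
        proof cases
          case 1 then show ?thesis using bdJ bz Sab by auto
        next
          case 2 then show ?thesis using bdJ bz Szd by auto
        next
          case 3
          then have "i \<notin> Sa" "i \<notin> Sz" "i \<in> J" using Tdis[OF 3(1)] u by auto
          then show ?thesis using Sa Sz by auto
        qed
      qed
      show "J - {a, z} \<subseteq> \<Union>(insert {b, d} (M - {Sa, Sz}))"
      proof
        fix i assume i: "i \<in> J - {a,z}"
        show "i \<in> \<Union>(insert {b, d} (M - {Sa, Sz}))"
        proof (cases "i = b \<or> i = d")
          case True then show ?thesis by blast
        next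
          case False
          then have "i \<notin> Sa" "i \<notin> Sz" using i Sab Szd by auto
          moreover obtain T where "T \<in> M" "i \<in> T" using u i by blast
          ultimately show ?thesis by blast
        qed
      qed
    qed
    show "card T = 2" if hT: "T \<in> insert {b, d} (M - {Sa, Sz})" for T
      using hT bz pp_block[OF M(1)] by auto
    show "T1 \<inter> T2 = {}" if h: "T1 \<in> insert {b, d} (M - {Sa, Sz})" "T2 \<in> insert {b, d} (M - {Sa, Sz})"
       "T1 \<noteq> T2" for T1 T2
    proof -
      have bdT: "{b,d} \<inter> T = {}" if "T \<in> M - {Sa,Sz}" for T
        using Tdis[OF that] Sab Szd by blast
      consider "T1 = {b,d}" "T2 \<in> M - {Sa,Sz}" | "T2 = {b,d}" "T1 \<in> M - {Sa,Sz}"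
        | "T1 \<in> M - {Sa,Sz}" "T2 \<in> M - {Sa,Sz}" using h by blast
      then show ?thesis
      proof cases
        case 1 then show ?thesis using bdT by blast
      next
        case 2 then show ?thesis using bdT by blast
      next
        case 3 then show ?thesis using pp_disj[OF M(1)] h(3) by blast
      qed
    qed
  qed
  have oth: "other {b,d} b = d" using other2[OF bz(3)] .
  have "G a z M'' {b,d} b = insert {a,b} (insert {z,d} (M'' - {{b,d}}))"
    unfolding G_def oth by simp
  also have "M'' - {{b,d}} = M - {Sa,Sz}" unfolding M''_def using bdnot by auto
  also have "insert {a,b} (insert {z,d} (M - {Sa,Sz})) = M" using Sab Szd Sa Sz by auto
  finally have "G a z M'' {b,d} b = M" .
  then show ?thesis using M''mem unfolding M''_def by blast
qed

lemma G_inj: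
  assumes M1: "M1 \<in> pair_partitions (J - {a,z})" "S1 \<in> M1" "b1 \<in> S1"
    and M2: "M2 \<in> pair_partitions (J - {a,z})" "S2 \<in> M2" "b2 \<in> S2"
    and az: "a \<noteq> z"
    and eq: "G a z M1 S1 b1 = G a z M2 S2 b2"
  shows "M1 = M2 \<and> S1 = S2 \<and> b1 = b2"
proof -
  define d1 where "d1 = other S1 b1"
  define d2 where "d2 = other S2 b2"
  have S1e: "S1 = {b1,d1}" "d1 \<noteq> b1" using pp_block_other[OF M1] d1_def by auto
  have S2e: "S2 = {b2,d2}" "d2 \<noteq> b2" using pp_block_other[OF M2] d2_def by auto
  have u1: "\<Union>M1 = J - {a,z}" using pp_Un[OF M1(1)] .
  have u2: "\<Union>M2 = J - {a,z}" using pp_Un[OF M2(1)] .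
  have n1: "b1 \<noteq> a" "b1 \<noteq> z" "d1 \<noteq> a" "d1 \<noteq> z" using u1 M1(2) S1e by auto
  have n2: "b2 \<noteq> a" "b2 \<noteq> z" "d2 \<noteq> a" "d2 \<noteq> z" using u2 M2(2) S2e by auto
  have E: "insert {a,b1} (insert {z,d1} (M1 - {S1})) = insert {a,b2} (insert {z,d2} (M2 - {S2}))"
    using eq unfolding G_def d1_def d2_def by simp
  have a1: "a \<notin> T" "z \<notin> T" if "T \<in> M1" for T using that u1 by auto
  have a2: "a \<notin> T" "z \<notin> T" if "T \<in> M2" for T using that u2 by auto
  have "{a,b1} \<in> insert {a,b2} (insert {z,d2} (M2 - {S2}))" unfolding E[symmetric] by simp
  then have bb: "b1 = b2"
  proof -
    assume "{a,b1} \<in> insert {a,b2} (insert {z,d2} (M2 - {S2}))"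
    then consider "{a,b1} = {a,b2}" | "{a,b1} = {z,d2}" | "{a,b1} \<in> M2" by (metis insertE DiffD1)
    then show ?thesis
    proof cases
      case 1 then show ?thesis using n1 n2 by (auto simp: doubleton_eq_iff)
    next
      case 2 then show ?thesis using az n2 by (auto simp: doubleton_eq_iff)
    next
      case 3 then show ?thesis using a2 by blast
    qed
  qed
  have "{z,d1} \<in> insert {a,b2} (insert {z,d2} (M2 - {S2}))" unfolding E[symmetric] by simp
  then have dd: "d1 = d2"
  proof -
    assume "{z,d1} \<in> insert {a,b2} (insert {z,d2} (M2 - {S2}))"
    then consider "{z,d1} = {a,b2}" | "{z,d1} = {z,d2}" | "{z,d1} \<in> M2" by (metis insertE DiffD1)
    then show ?thesis
    proof cases
      case 1 then show ?thesis using az n2 by (auto simp: doubleton_eq_iff)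
    next
      case 2 then show ?thesis using n1 n2 by (auto simp: doubleton_eq_iff)
    next
      case 3 then show ?thesis using a2 by blast
    qed
  qed
  have SS: "S1 = S2" using S1e S2e bb dd by simp
  have nin1: "{a,b1} \<notin> M1" "{z,d1} \<notin> M1" using a1(1)[of "{a,b1}"] a1(2)[of "{z,d1}"] by blast+
  have nin2: "{a,b2} \<notin> M2" "{z,d2} \<notin> M2" using a2(1)[of "{a,b2}"] a2(2)[of "{z,d2}"] by blast+
  have r1: "M1 - {S1} = insert {a,b1} (insert {z,d1} (M1 - {S1})) - {{a,b1},{z,d1}}"
    using nin1 by auto
  have r2: "M2 - {S2} = insert {a,b2} (insert {z,d2} (M2 - {S2})) - {{a,b2},{z,d2}}"
    using nin2 by auto
  have E': "insert {a,b1} (insert {z,d1} (M1 - {S1})) - {{a,b1},{z,d1}} = insert {a,b2} (insert {z,d2} (M2 - {S2})) - {{a,b2},{z,d2}}"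
    using E bb dd by simp
  have "M1 - {S1} = M2 - {S2}" by (rule trans[OF r1 trans[OF E' r2[symmetric]]])
  then have "M1 = M2" using M1(2) M2(2) SS by (metis insert_Diff)
  then show ?thesis using SS bb by simp
qed


lemma pp_not_az: "M \<in> pair_partitions (J - {a,z}) \<Longrightarrow> {a,z} \<notin> M"
  using pp_Un[of M "J - {a,z}"] by blast

lemma sum_pp_split:
  assumes fin: "finite J" and az: "a \<noteq> z" "a \<in> J" "z \<in> J"
  shows "(\<Sum>M\<in>pair_partitions J. g M) =
    (\<Sum>M\<in>pair_partitions (J - {a,z}). g (insert {a,z} M) + (\<Sum>S\<in>M. \<Sum>b\<in>S. g (G a z M S b)))"
proof -
  let ?J' = "J - {a,z}"
  define P1 where "P1 = {M\<in>pair_partitions J. {a,z} \<in> M}"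
  define P2 where "P2 = {M\<in>pair_partitions J. {a,z} \<notin> M}"
  have fJ': "finite ?J'" using fin by simp
  have un: "pair_partitions J = P1 \<union> P2" unfolding P1_def P2_def by blast
  have di: "P1 \<inter> P2 = {}" unfolding P1_def P2_def by blast
  have fP: "finite P1" "finite P2" unfolding P1_def P2_def using pp_fin[OF fin] by auto
  have s0: "(\<Sum>M\<in>pair_partitions J. g M) = sum g P1 + sum g P2"
    unfolding un using sum.union_disjoint[OF fP di] .
  have im1: "P1 = insert {a,z} ` pair_partitions ?J'"
  proof
    show "P1 \<subseteq> insert {a,z} ` pair_partitions ?J'"
    proof
      fix M assume "M \<in> P1"
      then have M: "M \<in> pair_partitions J" "{a,z} \<in> M" unfolding P1_def by auto
      have "M = insert {a,z} (M - {{a,z}})" using insert_Diff[OF M(2)] by simp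
      then show "M \<in> insert {a,z} ` pair_partitions ?J'"
        using insA_inv[OF M az(1)] by (rule image_eqI)
    qed
    show "insert {a,z} ` pair_partitions ?J' \<subseteq> P1"
    proof
      fix M assume "M \<in> insert {a,z} ` pair_partitions ?J'"
      then obtain M0 where "M0 \<in> pair_partitions ?J'" "M = insert {a,z} M0" by blast
      then show "M \<in> P1" unfolding P1_def using insA_mem[OF _ az] by simp
    qed
  qed
  have inj1: "inj_on (insert {a,z}) (pair_partitions ?J')"
  proof (rule inj_onI)
    fix M1 M2 assume h: "M1 \<in> pair_partitions ?J'" "M2 \<in> pair_partitions ?J'"
      "insert {a,z} M1 = insert {a,z} M2"
    have "{a,z} \<notin> M1" "{a,z} \<notin> M2" using pp_not_az[OF h(1)] pp_not_az[OF h(2)] by auto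
    then show "M1 = M2" using h(3) insert_ident[of "{a,z}" M1 M2] by simp
  qed
  have s1: "sum g P1 = (\<Sum>M\<in>pair_partitions ?J'. g (insert {a,z} M))"
    unfolding im1 using sum.reindex[OF inj1] by simp
  define Sg where "Sg = Sigma (pair_partitions ?J') (\<lambda>M. Sigma M (\<lambda>S. S))"
  define h where "h = (\<lambda>(M, S, b). G a z M S b)"
  have im2: "P2 = h ` Sg"
  proof
    show "P2 \<subseteq> h ` Sg"
    proof
      fix M assume "M \<in> P2"
      then have M: "M \<in> pair_partitions J" "{a,z} \<notin> M" unfolding P2_def by auto
      obtain M'' S b where "M'' \<in> pair_partitions ?J'" "S \<in> M''" "b \<in> S" "G a z M'' S b = M"
        using G_surj[OF M az] by blast
      then show "M \<in> h ` Sg"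
        by (intro image_eqI[where x="(M'',S,b)"]) (auto simp: h_def Sg_def)
    qed
    show "h ` Sg \<subseteq> P2"
    proof
      fix M assume "M \<in> h ` Sg"
      then obtain p where p: "p \<in> Sg" "M = h p" by blast
      obtain M'' S b where pe: "p = (M'',S,b)" by (cases p) auto
      have "M'' \<in> pair_partitions ?J'" "S \<in> M''" "b \<in> S" using p(1) pe unfolding Sg_def by auto
      moreover have "M = G a z M'' S b" using p(2) pe unfolding h_def by simp
      ultimately show "M \<in> P2" unfolding P2_def using G_mem[OF _ _ _ az] by simp
    qed
  qed
  have inj2: "inj_on h Sg"
  proof (rule inj_onI)
    fix p1 p2 assume h1: "p1 \<in> Sg" "p2 \<in> Sg" "h p1 = h p2"
    obtain M1 S1 b1 where p1: "p1 = (M1,S1,b1)" by (cases p1) auto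
    obtain M2 S2 b2 where p2: "p2 = (M2,S2,b2)" by (cases p2) auto
    have m1: "M1 \<in> pair_partitions ?J'" "S1 \<in> M1" "b1 \<in> S1" using h1(1) p1 unfolding Sg_def by auto
    have m2: "M2 \<in> pair_partitions ?J'" "S2 \<in> M2" "b2 \<in> S2" using h1(2) p2 unfolding Sg_def by auto
    have "G a z M1 S1 b1 = G a z M2 S2 b2" using h1(3) p1 p2 unfolding h_def by simp
    then show "p1 = p2" using G_inj[OF m1 m2 az(1)] p1 p2 by simp
  qed
  have s2: "sum g P2 = (\<Sum>M\<in>pair_partitions ?J'. \<Sum>S\<in>M. \<Sum>b\<in>S. g (G a z M S b))"
  proof -
    have "sum g P2 = sum (g \<circ> h) Sg" unfolding im2 using sum.reindex[OF inj2] .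
    also have "\<dots> = (\<Sum>M\<in>pair_partitions ?J'. \<Sum>q\<in>Sigma M (\<lambda>S. S). g (G a z M (fst q) (snd q)))"
    proof -
      have finS: "\<forall>M\<in>pair_partitions ?J'. finite (Sigma M (\<lambda>S. S))"
      proof
        fix M assume M: "M \<in> pair_partitions ?J'"
        show "finite (Sigma M (\<lambda>S. S))"
          using pp_M_fin[OF fJ' M] pp_block[OF M] by (intro finite_SigmaI) auto
      qed
      have e1: "(\<Sum>M\<in>pair_partitions ?J'. \<Sum>q\<in>Sigma M (\<lambda>S. S). g (G a z M (fst q) (snd q)))
          = (\<Sum>(M,q)\<in>Sg. g (G a z M (fst q) (snd q)))"
        unfolding Sg_def by (rule sum.Sigma[OF pp_fin[OF fJ'] finS])
      have e2: "(\<Sum>(M,q)\<in>Sg. g (G a z M (fst q) (snd q))) = sum (g \<circ> h) Sg"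
        by (rule sum.cong[OF refl]) (auto simp: h_def split: prod.splits)
      show ?thesis using e1 e2 by simp
    qed
    also have "\<dots> = (\<Sum>M\<in>pair_partitions ?J'. \<Sum>S\<in>M. \<Sum>b\<in>S. g (G a z M S b))"
    proof (rule sum.cong[OF refl])
      fix M assume M: "M \<in> pair_partitions ?J'"
      have fM: "finite M" using pp_M_fin[OF fJ' M] .
      have fS: "\<forall>S\<in>M. finite S" using pp_block[OF M] by blast
      show "(\<Sum>q\<in>Sigma M (\<lambda>S. S). g (G a z M (fst q) (snd q))) = (\<Sum>S\<in>M. \<Sum>b\<in>S. g (G a z M S b))"
        using sum.Sigma[OF fM fS, of "\<lambda>S b. g (G a z M S b)"] by (simp add: case_prod_unfold)
    qed
    finally show ?thesis .
  qed
  show ?thesis using s0 s1 s2 by (simp add: sum.distrib)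
qed



lemma mixed2: "mixed x {p,q} \<longleftrightarrow> x p \<noteq> x q"
  unfolding mixed_def by auto

lemma card_filter_insert:
  assumes "finite R" "A \<notin> R"
  shows "card {T \<in> insert A R. P T} = (if P A then 1 else 0) + card {T\<in>R. P T}"
proof (cases "P A")
  case True
  then have "{T \<in> insert A R. P T} = insert A {T\<in>R. P T}" by auto
  moreover have "card (insert A {T\<in>R. P T}) = Suc (card {T\<in>R. P T})"
    using assms by (intro card_insert_disjoint) auto
  ultimately show ?thesis using True by simp
next
  case False
  then have "{T \<in> insert A R. P T} = {T\<in>R. P T}" by auto
  then show ?thesis using False by simp
qed

lemma kk_ins:
  assumes "finite M" "{a,z} \<notin> M" "x a" "\<not> x z"
  shows "kk x (insert {a,z} M) = kk x M + 1"
  unfolding kk_def using card_filter_insert[OF assms(1,2), of "mixed x"] assms(3,4)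
  by (simp add: mixed2)

lemma kk_G:
  assumes fin: "finite J" and M: "M \<in> pair_partitions (J - {a,z})" and S: "S \<in> M" "b \<in> S"
    and az: "a \<noteq> z" and x: "x a" "\<not> x z"
  shows "kk x (G a z M S b) = kk x M - (if mixed x S then 1 else 0) + (if x b then 0 else 1)
          + (if x (other S b) then 1 else 0)"
proof -
  define d where "d = other S b"
  have Sbd: "S = {b,d}" "d \<noteq> b" using pp_block_other[OF M S] d_def by auto
  have u: "\<Union>M = J - {a,z}" using pp_Un[OF M] .
  have fM: "finite M" using pp_M_fin[OF _ M] fin by simp
  have bJ: "b \<noteq> a" "b \<noteq> z" "d \<noteq> a" "d \<noteq> z" using u S Sbd by auto
  have aT: "a \<notin> T" "z \<notin> T" if "T \<in> M" for T using that u by auto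
  have n1: "{a,b} \<notin> insert {z,d} (M - {S})"
  proof
    assume "{a,b} \<in> insert {z,d} (M - {S})"
    then consider "{a,b} = {z,d}" | "{a,b} \<in> M" by (metis insertE DiffD1)
    then show False
    proof cases
      case 1 then show False using az bJ by (auto simp: doubleton_eq_iff)
    next
      case 2 then show False using aT(1)[OF 2] by simp
    qed
  qed
  have n2: "{z,d} \<notin> M - {S}"
  proof
    assume "{z,d} \<in> M - {S}"
    then show False using aT(2)[of "{z,d}"] by simp
  qed
  have Gd: "G a z M S b = insert {a,b} (insert {z,d} (M - {S}))" unfolding G_def d_def by simp
  have c1: "kk x (G a z M S b) = (if mixed x {a,b} then 1 else 0) + ((if mixed x {z,d} then 1 else 0)
       + card {T \<in> M - {S}. mixed x T})"
    unfolding kk_def Gd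
    using card_filter_insert[OF _ n1, of "mixed x"] card_filter_insert[OF _ n2, of "mixed x"] fM
    by simp
  have "{T \<in> M - {S}. mixed x T} = {T\<in>M. mixed x T} - {S}" by auto
  then have c2: "card {T \<in> M - {S}. mixed x T} = kk x M - (if mixed x S then 1 else 0)"
    unfolding kk_def using fM S(1) by (simp add: card_Diff_singleton_if)
  show ?thesis using c1 c2 x unfolding d_def[symmetric] by (simp add: mixed2)
qed


lemma sum_if_const: "finite M \<Longrightarrow> (\<Sum>S\<in>M. if P S then (c::rat) else 0) = of_nat (card {S\<in>M. P S}) * c"
  by (simp add: sum.inter_filter[symmetric])

lemma cancel:
  assumes fin: "finite J" and a: "a \<in> J" "x a" and z: "z \<in> J" "\<not> x z"
  shows "(\<Sum>M\<in>pair_partitions J. phi (card J) (kk x M)) = 0"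
proof -
  have az: "a \<noteq> z" using a z by auto
  define n where "n = card J"
  let ?J' = "J - {a,z}"
  have fJ': "finite ?J'" using fin by simp
  have cJ': "card ?J' = n - 2" unfolding n_def using a z az fin by (simp add: card_Diff_subset)
  have n2: "n \<ge> 2"
  proof -
    have "{a,z} \<subseteq> J" using a z by simp
    then have "card {a,z} \<le> card J" using fin by (rule card_mono[rotated])
    then show ?thesis using az unfolding n_def by simp
  qed
  have sp: "(\<Sum>M\<in>pair_partitions J. phi n (kk x M)) =
    (\<Sum>M\<in>pair_partitions ?J'. phi n (kk x (insert {a,z} M)) + (\<Sum>S\<in>M. \<Sum>b\<in>S. phi n (kk x (G a z M S b))))"
    by (rule sum_pp_split[OF fin az a(1) z(1)])
  have zero: "phi n (kk x (insert {a,z} M)) + (\<Sum>S\<in>M. \<Sum>b\<in>S. phi n (kk x (G a z M S b))) = 0"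
    if M: "M \<in> pair_partitions ?J'" for M
  proof -
    define k where "k = kk x M"
    have fM: "finite M" using pp_M_fin[OF fJ' M] .
    have cM: "n - 2 = 2 * card M" using pp_card[OF fJ' M] cJ' by simp
    have kle: "k \<le> card M" unfolding k_def kk_def using fM by (intro card_mono) auto
    have h1: "phi n (kk x (insert {a,z} M)) = phi n (k+1)"
      using kk_ins[OF fM pp_not_az[OF M] a(2) z(2)] k_def by simp
    have h2: "(\<Sum>b\<in>S. phi n (kk x (G a z M S b))) =
        2 * phi n (k+1) + (if mixed x S then phi n (k-1) - phi n (k+1) else 0)" if S: "S \<in> M" for S
    proof -
      obtain p q where pq: "p \<noteq> q" "S = {p,q}" using pp_block2[OF M S] by blast
      have op: "other S p = q" "other S q = p" using pq other2[of p q] other2[of q p]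
        by (auto simp: insert_commute)
      have kp: "kk x (G a z M S p) = k - (if mixed x S then 1 else 0) + (if x p then 0 else 1)
          + (if x q then 1 else 0)"
        using kk_G[OF fin M S _ az a(2) z(2), of p] pq op k_def by simp
      have kq: "kk x (G a z M S q) = k - (if mixed x S then 1 else 0) + (if x q then 0 else 1)
          + (if x p then 1 else 0)"
        using kk_G[OF fin M S _ az a(2) z(2), of q] pq op k_def by simp
      have k1: "mixed x S \<Longrightarrow> k \<ge> 1"
      proof -
        assume "mixed x S"
        then have "S \<in> {T\<in>M. mixed x T}" using S by simp
        then have "{T\<in>M. mixed x T} \<noteq> {}" by blast
        then show "k \<ge> 1" unfolding k_def kk_def using fM by (simp add: Suc_le_eq card_gt_0_iff)
      qed
      have "(\<Sum>b\<in>S. phi n (kk x (G a z M S b))) = phi n (kk x (G a z M S p)) + phi n (kk x (G a z M S q))"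
        using pq by simp
      also have "\<dots> = 2 * phi n (k+1) + (if mixed x S then phi n (k-1) - phi n (k+1) else 0)"
        unfolding kp kq using k1 pq by (cases "x p"; cases "x q") (auto simp: mixed2)
      finally show ?thesis .
    qed
    have "(\<Sum>S\<in>M. \<Sum>b\<in>S. phi n (kk x (G a z M S b))) =
        (\<Sum>S\<in>M. 2 * phi n (k+1) + (if mixed x S then phi n (k-1) - phi n (k+1) else 0))"
      using h2 by (rule sum.cong[OF refl])
    also have "\<dots> = of_nat (card M) * (2 * phi n (k+1)) + of_nat k * (phi n (k-1) - phi n (k+1))"
      by (simp add: sum.distrib sum_if_const[OF fM] k_def kk_def)
    finally have s2: "(\<Sum>S\<in>M. \<Sum>b\<in>S. phi n (kk x (G a z M S b))) =
       of_nat (card M) * (2 * phi n (k+1)) + of_nat k * (phi n (k-1) - phi n (k+1))" .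
    have pr: "of_nat (n - 1 - k) * phi n (Suc k) + of_nat k * phi n (k - 1) = 0"
      using phi_rec[of k n] kle cM n2 by simp
    have nn: "(of_nat (n - 1 - k) :: rat) = 1 + 2 * of_nat (card M) - of_nat k"
      using kle cM n2 by (simp add: of_nat_diff)
    have "phi n (k+1) + (of_nat (card M) * (2 * phi n (k+1)) + of_nat k * (phi n (k-1) - phi n (k+1)))
        = of_nat (n - 1 - k) * phi n (Suc k) + of_nat k * phi n (k - 1)"
      unfolding nn by (simp add: algebra_simps)
    then show ?thesis using h1 s2 pr by simp
  qed
  show ?thesis unfolding n_def[symmetric] sp using zero by (simp add: sum.neutral)
qed


lemma kk_flip:
  assumes M: "M \<in> pair_partitions J" and S: "S \<in> M"
  shows "kk (flip x S) M = kk x M"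
proof -
  have "{T\<in>M. mixed (flip x S) T} = {T\<in>M. mixed x T}"
  proof (rule Collect_cong)
    fix T show "(T \<in> M \<and> mixed (flip x S) T) = (T \<in> M \<and> mixed x T)"
    proof (cases "T \<in> M")
      case True
      show ?thesis
      proof (cases "T = S")
        case True then show ?thesis unfolding mixed_def flip_def by auto
      next
        case False
        then have "S \<inter> T = {}" using pp_disj[OF M S \<open>T \<in> M\<close>] by blast
        then have "\<forall>i\<in>T. flip x S i = x i" unfolding flip_def by auto
        then show ?thesis unfolding mixed_def by auto
      qed
    qed simp
  qed
  then show ?thesis unfolding kk_def by simp
qed

lemma kk_parity:
  assumes fin: "finite J" and M: "M \<in> pair_partitions J"
  shows "even (kk x M) \<longleftrightarrow> even (weight J x)"
proof -
  have fM: "finite M" using pp_M_fin[OF fin M] .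
  have u: "\<Union>M = J" using pp_Un[OF M] .
  have "{i\<in>J. x i} = (\<Union>S\<in>M. {i\<in>S. x i})" using u by blast
  then have "weight J x = card (\<Union>S\<in>M. {i\<in>S. x i})" unfolding weight_def by simp
  also have "\<dots> = (\<Sum>S\<in>M. card {i\<in>S. x i})"
  proof (rule card_UN_disjoint[OF fM])
    show "\<forall>S\<in>M. finite {i \<in> S. x i}" using pp_block[OF M] by auto
    show "\<forall>S\<in>M. \<forall>T\<in>M. S \<noteq> T \<longrightarrow> {i \<in> S. x i} \<inter> {i \<in> T. x i} = {}"
      using pp_disj[OF M] by blast
  qed
  also have "\<dots> = (\<Sum>S\<in>M. (if mixed x S then 1 else 0) + 2 * (if \<not> mixed x S \<and> (\<forall>i\<in>S. x i) then 1 else 0))"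
  proof (rule sum.cong[OF refl])
    fix S assume S: "S \<in> M"
    obtain p q where pq: "p \<noteq> q" "S = {p,q}" using pp_block2[OF M S] by blast
    show "card {i\<in>S. x i} = (if mixed x S then 1 else 0) + 2 * (if \<not> mixed x S \<and> (\<forall>i\<in>S. x i) then 1 else 0)"
    proof (cases "x p"; cases "x q")
      assume "x p" "x q"
      then have "{i\<in>S. x i} = {p,q}" using pq by auto
      then show ?thesis using pq \<open>x p\<close> \<open>x q\<close> by (simp add: mixed2)
    next
      assume "x p" "\<not> x q"
      then have "{i\<in>S. x i} = {p}" using pq by auto
      then show ?thesis using pq \<open>x p\<close> \<open>\<not> x q\<close> by (simp add: mixed2)
    next
      assume "\<not> x p" "x q"
      then have "{i\<in>S. x i} = {q}" using pq by auto
      then show ?thesis using pq \<open>\<not> x p\<close> \<open>x q\<close> by (simp add: mixed2)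
    next
      assume "\<not> x p" "\<not> x q"
      then have "{i\<in>S. x i} = {}" using pq by auto
      then show ?thesis using pq \<open>\<not> x p\<close> \<open>\<not> x q\<close> by (simp add: mixed2)
    qed
  qed
  also have "\<dots> = kk x M + 2 * (\<Sum>S\<in>M. (if \<not> mixed x S \<and> (\<forall>i\<in>S. x i) then 1 else 0))"
  proof -
    have "(\<Sum>S\<in>M. (if mixed x S then 1 else 0)) = kk x M"
      unfolding kk_def using fM by (simp add: sum.inter_filter[symmetric])
    then show ?thesis by (simp add: sum.distrib sum_distrib_left)
  qed
  finally show ?thesis by simp
qed

lemma pp_nonempty: "finite J \<Longrightarrow> even (card J) \<Longrightarrow> pair_partitions J \<noteq> {}"
proof (induction "card J" arbitrary: J rule: less_induct)
  case less
  show ?case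
  proof (cases "J = {}")
    case True
    have "{} \<in> pair_partitions J" unfolding True pair_partitions_def by simp
    then show ?thesis by blast
  next
    case False
    then obtain a where a: "a \<in> J" by blast
    have "card J \<noteq> 1"
    proof
      assume "card J = 1" then show False using less(3) by simp
    qed
    moreover have "card J \<noteq> 0" using less(2) False by simp
    ultimately have "card J \<ge> 2" by linarith
    then have "card (J - {a}) \<noteq> 0" using a less(2) by simp
    then have "J - {a} \<noteq> {}" by (metis card.empty)
    then obtain b where b: "b \<in> J - {a}" by blast
    have ab: "a \<noteq> b" "b \<in> J" using b by auto
    have cJ: "card (J - {a,b}) = card J - 2" using a ab less(2) by (simp add: card_Diff_subset)
    have "card (J - {a,b}) < card J" using cJ \<open>card J \<noteq> 0\<close> by simp
    moreover have "even (card (J - {a,b}))" using cJ less(3) \<open>card J \<noteq> 1\<close> \<open>card J \<noteq> 0\<close>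
      by (simp add: even_diff_nat)
    ultimately obtain M' where "M' \<in> pair_partitions (J - {a,b})"
      using less(1)[of "J - {a,b}"] less(2) by auto
    then have "insert {a,b} M' \<in> pair_partitions J" using insA_mem[OF _ ab(1) a ab(2)] by simp
    then show ?thesis by blast
  qed
qed


lemma kk_le: "finite J \<Longrightarrow> M \<in> pair_partitions J \<Longrightarrow> 2 * kk x M \<le> card J"
proof -
  assume fin: "finite J" and M: "M \<in> pair_partitions J"
  have "kk x M \<le> card M" unfolding kk_def using pp_M_fin[OF fin M] by (intro card_mono) auto
  then show ?thesis using pp_card[OF fin M] by simp
qed

lemma kk_const:
  assumes M: "M \<in> pair_partitions J" and c: "(\<forall>i\<in>J. x i) \<or> (\<forall>i\<in>J. \<not> x i)"
  shows "kk x M = 0"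
proof -
  have nm: "\<forall>S\<in>M. \<not> mixed x S"
  proof
    fix S assume "S \<in> M"
    then have "S \<subseteq> J" using pp_block[OF M] by blast
    then show "\<not> mixed x S" using c unfolding mixed_def by blast
  qed
  then have "{S\<in>M. mixed x S} = {}" by blast
  then show ?thesis unfolding kk_def by (metis card.empty)
qed

theorem lemma12:
  fixes J :: "'a set"
  assumes "finite J" and "even (card J)"
  shows "has_2_decomposition J (EvenNAE J)"
proof -
  define n where "n = card J"
  define C where "C = card (pair_partitions J)"
  have Cpos: "C > 0" unfolding C_def using pp_nonempty[OF assms] pp_fin[OF assms(1)]
    by (simp add: card_gt_0_iff)
  define D where "D = (\<lambda>(x::'a \<Rightarrow> bool) (M::'a set set). if even (kk x M) then (1 - phi n (kk x M)) / of_nat C else (0::rat))"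
  show ?thesis unfolding has_2_decomposition_def
  proof (rule exI[of _ D], intro conjI ballI)
    fix x M assume x: "x \<in> cube J" and M: "M \<in> pair_partitions J"
    have "\<bar>phi n (kk x M)\<bar> \<le> 1" using phi_abs kk_le[OF assms(1) M] unfolding n_def by blast
    then have "1 - phi n (kk x M) \<ge> 0" by linarith
    then show "D x M \<ge> 0" unfolding D_def using Cpos by simp
  next
    fix x M S assume x: "x \<in> cube J" and M: "M \<in> pair_partitions J" and S: "S \<in> M"
    show "D (flip x S) M = D x M" unfolding D_def kk_flip[OF M S] ..
  next
    fix x assume x: "x \<in> cube J"
    have fP: "finite (pair_partitions J)" using pp_fin[OF assms(1)] .
    have wle: "weight J x \<le> n" unfolding weight_def n_def using assms(1) by (intro card_mono) auto
    show "EvenNAE J x = (\<Sum>M\<in>pair_partitions J. D x M)"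
    proof (cases "(\<forall>i\<in>J. x i) \<or> (\<forall>i\<in>J. \<not> x i)")
      case True
      then have "D x M = 0" if "M \<in> pair_partitions J" for M
        unfolding D_def using kk_const[OF that True] by simp
      then have s0: "(\<Sum>M\<in>pair_partitions J. D x M) = 0" by simp
      have "weight J x = n \<or> weight J x = 0"
      proof (cases "\<forall>i\<in>J. x i")
        case True
        then have "{i\<in>J. x i} = J" by blast
        then show ?thesis unfolding weight_def n_def by simp
      next
        case False
        then have "\<forall>i\<in>J. \<not> x i" using \<open>(\<forall>i\<in>J. x i) \<or> (\<forall>i\<in>J. \<not> x i)\<close> by blast
        then have "{i\<in>J. x i} = {}" by blast
        then show ?thesis unfolding weight_def by (metis card.empty)
      qed
      then have "EvenNAE J x = 0" unfolding EvenNAE_def n_def[symmetric] by auto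
      then show ?thesis using s0 by simp
    next
      case False
      then obtain a z where a: "a \<in> J" "x a" and z: "z \<in> J" "\<not> x z" by blast
      have can: "(\<Sum>M\<in>pair_partitions J. phi n (kk x M)) = 0"
        using cancel[OF assms(1) a z] unfolding n_def .
      have w1: "weight J x \<ge> 1"
      proof -
        have "{i\<in>J. x i} \<noteq> {}" using a by blast
        then show ?thesis unfolding weight_def using assms(1) by (simp add: Suc_le_eq card_gt_0_iff)
      qed
      have w2: "weight J x \<le> n - 1"
      proof -
        have "{i\<in>J. x i} \<subseteq> J - {z}" using z by blast
        then have "weight J x \<le> card (J - {z})" unfolding weight_def using assms(1) by (intro card_mono) auto
        then show ?thesis using z assms(1) unfolding n_def by simp
      qed
      show ?thesis
      proof (cases "even (weight J x)")
        case True
        then have ev: "even (kk x M)" if "M \<in> pair_partitions J" for M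
          using kk_parity[OF assms(1) that] by simp
        have "(\<Sum>M\<in>pair_partitions J. D x M) = (\<Sum>M\<in>pair_partitions J. (1 - phi n (kk x M)) / of_nat C)"
          unfolding D_def using ev by (intro sum.cong) auto
        also have "\<dots> = (\<Sum>M\<in>pair_partitions J. (1 - phi n (kk x M))) / of_nat C"
          by (simp add: sum_divide_distrib)
        also have "\<dots> = (of_nat C - 0) / of_nat C"
          using can by (simp add: sum_subtractf C_def)
        also have "\<dots> = 1" using Cpos by simp
        finally have s1: "(\<Sum>M\<in>pair_partitions J. D x M) = 1" .
        have "EvenNAE J x = 1" unfolding EvenNAE_def n_def[symmetric] using True w1 w2 by simp
        then show ?thesis using s1 by simp
      next
        case False
        then have od: "\<not> even (kk x M)" if "M \<in> pair_partitions J" for M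
          using kk_parity[OF assms(1) that] by simp
        have "(\<Sum>M\<in>pair_partitions J. D x M) = 0"
          unfolding D_def using od by (intro sum.neutral) auto
        moreover have "EvenNAE J x = 0" unfolding EvenNAE_def using False by simp
        ultimately show ?thesis by simp
      qed
    qed
  qed
qed


end
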